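(* Let $Y\subset\mathbb{R}^n$ be open and let $\omega\colon Y\to\mathbb{R}^n$, $f\colon Y\to\mathbb{R}^n$, $F\colon Y\to\mathbb{R}$ and $f^{\mathrm{num}}\colon Y\times Y\to\mathbb{R}^n$ be arbitrary functions with $f^{\mathrm{num}}(u,u)=f(u)$ for all $u\in Y$. (No further relation between $\omega,f,F$ and no convexity is assumed.) Then the following are equivalent: (A) there exists $F^{\mathrm{num}}\colon Y\times Y\to\mathbb{R}$ with $F^{\mathrm{num}}(u,u)=F(u)$ for all $u\in Y$ such that for all $u_-,u_0,u_+\in Y$, $$\omega(u_0)\cdot\big(f^{\mathrm{num}}(u_0,u_+)-f^{\mathrm{num}}(u_-,u_0)\big)\ \ge\ F^{\mathrm{num}}(u_0,u_+)-F^{\mathrm{num}}(u_-,u_0);$$ (B) for all $u_-,u_+\in Y$, $$\big(\omega(u_+)-\omega(u_-)\big)\cdot f^{\mathrm{num}}(u_-,u_+)\ \le\ \big(\omega(u_+)\cdot f(u_+)-F(u_+)\big)-\big(\omega(u_-)\cdot f(u_-)-F(u_-)\big).$$ Moreover, there exists a consistent $F^{\mathrm{num}}$ for which (A) holds with equality for all triples if and only if (B) holds with equality for all pairs; and in that case $F^{\mathrm{num}}$ is uniquely determined by $$F^{\mathrm{num}}(u_-,u_+)=\{\{F\}\}+\{\{\omega\}\}\cdot f^{\mathrm{num}}(u_-,u_+)-\{\{\omega\cdot f\}\}.$$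
   Context: For a function $a$ on $Y$ and states $u_-,u_+$, write $a_\pm=a(u_\pm)$, the mean $\{\{a\}\}=\tfrac12(a_-+a_+)$ and the jump $[\![a]\!]=a_+-a_-$. *)

theory Defs
  imports "HOL-Analysis.Analysis"
begin

end

theory Submission
  imports Defs
begin

theorem mainTheorem1:
  fixes Y :: "(real ^ 'n) set"
    and \<omega> f :: "real ^ 'n \<Rightarrow> real ^ 'n"
    and F :: "real ^ 'n \<Rightarrow> real"
    and fnum :: "real ^ 'n \<Rightarrow> real ^ 'n \<Rightarrow> real ^ 'n"
  assumes "open Y"
    and "\<And>u. u \<in> Y \<Longrightarrow> fnum u u = f u"
  shows "((\<exists>Fnum :: real ^ 'n \<Rightarrow> real ^ 'n \<Rightarrow> real.
              (\<forall>u\<in>Y. Fnum u u = F u) \<and>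
              (\<forall>um\<in>Y. \<forall>u0\<in>Y. \<forall>up\<in>Y.
                 \<omega> u0 \<bullet> (fnum u0 up - fnum um u0) \<ge> Fnum u0 up - Fnum um u0))
          \<longleftrightarrow>
          (\<forall>um\<in>Y. \<forall>up\<in>Y.
             (\<omega> up - \<omega> um) \<bullet> fnum um up
               \<le> (\<omega> up \<bullet> f up - F up) - (\<omega> um \<bullet> f um - F um)))
       \<and>
       ((\<exists>Fnum :: real ^ 'n \<Rightarrow> real ^ 'n \<Rightarrow> real.
              (\<forall>u\<in>Y. Fnum u u = F u) \<and>
              (\<forall>um\<in>Y. \<forall>u0\<in>Y. \<forall>up\<in>Y.
                 \<omega> u0 \<bullet> (fnum u0 up - fnum um u0) = Fnum u0 up - Fnum um u0))
          \<longleftrightarrow>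
          (\<forall>um\<in>Y. \<forall>up\<in>Y.
             (\<omega> up - \<omega> um) \<bullet> fnum um up
               = (\<omega> up \<bullet> f up - F up) - (\<omega> um \<bullet> f um - F um)))
       \<and>
       (\<forall>Fnum :: real ^ 'n \<Rightarrow> real ^ 'n \<Rightarrow> real.
          ((\<forall>u\<in>Y. Fnum u u = F u) \<and>
           (\<forall>um\<in>Y. \<forall>u0\<in>Y. \<forall>up\<in>Y.
              \<omega> u0 \<bullet> (fnum u0 up - fnum um u0) = Fnum u0 up - Fnum um u0))
          \<longrightarrow> (\<forall>um\<in>Y. \<forall>up\<in>Y.
                 Fnum um up = (F um + F up) / 2
                   + ((\<omega> um + \<omega> up) /\<^sub>R 2) \<bullet> fnum um up
                   - (\<omega> um \<bullet> f um + \<omega> up \<bullet> f up) / 2))"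
proof -
  have fd: "\<And>u. u \<in> Y \<Longrightarrow> fnum u u = f u" by (rule assms(2))
  define G where "G = (\<lambda>a b. \<omega> a \<bullet> fnum a b - \<omega> a \<bullet> f a + F a)"
  have GF: "\<forall>u\<in>Y. G u u = F u" using fd by (simp add: G_def)
  show ?thesis
  proof (intro conjI allI impI)
    show "(\<exists>Fnum :: real ^ 'n \<Rightarrow> real ^ 'n \<Rightarrow> real.
              (\<forall>u\<in>Y. Fnum u u = F u) \<and>
              (\<forall>um\<in>Y. \<forall>u0\<in>Y. \<forall>up\<in>Y.
                 \<omega> u0 \<bullet> (fnum u0 up - fnum um u0) \<ge> Fnum u0 up - Fnum um u0))
          \<longleftrightarrow>
          (\<forall>um\<in>Y. \<forall>up\<in>Y.
             (\<omega> up - \<omega> um) \<bullet> fnum um up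
               \<le> (\<omega> up \<bullet> f up - F up) - (\<omega> um \<bullet> f um - F um))"
    proof
      assume "\<exists>Fnum :: real ^ 'n \<Rightarrow> real ^ 'n \<Rightarrow> real.
              (\<forall>u\<in>Y. Fnum u u = F u) \<and>
              (\<forall>um\<in>Y. \<forall>u0\<in>Y. \<forall>up\<in>Y.
                 \<omega> u0 \<bullet> (fnum u0 up - fnum um u0) \<ge> Fnum u0 up - Fnum um u0)"
      then obtain H :: "real ^ 'n \<Rightarrow> real ^ 'n \<Rightarrow> real" where H1: "\<forall>u\<in>Y. H u u = F u"
        and H2: "\<forall>um\<in>Y. \<forall>u0\<in>Y. \<forall>up\<in>Y.
                 \<omega> u0 \<bullet> (fnum u0 up - fnum um u0) \<ge> H u0 up - H um u0" by blast
      show "\<forall>um\<in>Y. \<forall>up\<in>Y.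
             (\<omega> up - \<omega> um) \<bullet> fnum um up
               \<le> (\<omega> up \<bullet> f up - F up) - (\<omega> um \<bullet> f um - F um)"
      proof (intro ballI)
        fix um up assume a: "um \<in> Y" "up \<in> Y"
        have 1: "\<omega> um \<bullet> (fnum um up - f um) \<ge> H um up - F um"
          using H2 H1 fd a by metis
        have 2: "\<omega> up \<bullet> (f up - fnum um up) \<ge> F up - H um up"
          using H2 H1 fd a by metis
        show "(\<omega> up - \<omega> um) \<bullet> fnum um up
               \<le> (\<omega> up \<bullet> f up - F up) - (\<omega> um \<bullet> f um - F um)"
          using 1 2 by (simp add: inner_diff_left inner_diff_right)
      qed
    next
      assume B: "\<forall>um\<in>Y. \<forall>up\<in>Y.
             (\<omega> up - \<omega> um) \<bullet> fnum um up
               \<le> (\<omega> up \<bullet> f up - F up) - (\<omega> um \<bullet> f um - F um)"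
      have "\<forall>um\<in>Y. \<forall>u0\<in>Y. \<forall>up\<in>Y.
                 \<omega> u0 \<bullet> (fnum u0 up - fnum um u0) \<ge> G u0 up - G um u0"
      proof (intro ballI)
        fix um u0 up assume a: "um \<in> Y" "u0 \<in> Y" "up \<in> Y"
        have "(\<omega> u0 - \<omega> um) \<bullet> fnum um u0
               \<le> (\<omega> u0 \<bullet> f u0 - F u0) - (\<omega> um \<bullet> f um - F um)" using B a by blast
        then show "\<omega> u0 \<bullet> (fnum u0 up - fnum um u0) \<ge> G u0 up - G um u0"
          by (simp add: G_def inner_diff_left inner_diff_right)
      qed
      then show "\<exists>Fnum :: real ^ 'n \<Rightarrow> real ^ 'n \<Rightarrow> real.
              (\<forall>u\<in>Y. Fnum u u = F u) \<and>
              (\<forall>um\<in>Y. \<forall>u0\<in>Y. \<forall>up\<in>Y.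
                 \<omega> u0 \<bullet> (fnum u0 up - fnum um u0) \<ge> Fnum u0 up - Fnum um u0)"
        using GF by blast
    qed
  next
    show "(\<exists>Fnum :: real ^ 'n \<Rightarrow> real ^ 'n \<Rightarrow> real.
              (\<forall>u\<in>Y. Fnum u u = F u) \<and>
              (\<forall>um\<in>Y. \<forall>u0\<in>Y. \<forall>up\<in>Y.
                 \<omega> u0 \<bullet> (fnum u0 up - fnum um u0) = Fnum u0 up - Fnum um u0))
          \<longleftrightarrow>
          (\<forall>um\<in>Y. \<forall>up\<in>Y.
             (\<omega> up - \<omega> um) \<bullet> fnum um up
               = (\<omega> up \<bullet> f up - F up) - (\<omega> um \<bullet> f um - F um))"
    proof
      assume "\<exists>Fnum :: real ^ 'n \<Rightarrow> real ^ 'n \<Rightarrow> real.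
              (\<forall>u\<in>Y. Fnum u u = F u) \<and>
              (\<forall>um\<in>Y. \<forall>u0\<in>Y. \<forall>up\<in>Y.
                 \<omega> u0 \<bullet> (fnum u0 up - fnum um u0) = Fnum u0 up - Fnum um u0)"
      then obtain H :: "real ^ 'n \<Rightarrow> real ^ 'n \<Rightarrow> real" where H1: "\<forall>u\<in>Y. H u u = F u"
        and H2: "\<forall>um\<in>Y. \<forall>u0\<in>Y. \<forall>up\<in>Y.
                 \<omega> u0 \<bullet> (fnum u0 up - fnum um u0) = H u0 up - H um u0" by blast
      show "\<forall>um\<in>Y. \<forall>up\<in>Y.
             (\<omega> up - \<omega> um) \<bullet> fnum um up
               = (\<omega> up \<bullet> f up - F up) - (\<omega> um \<bullet> f um - F um)"
      proof (intro ballI)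
        fix um up assume a: "um \<in> Y" "up \<in> Y"
        have 1: "\<omega> um \<bullet> (fnum um up - f um) = H um up - F um"
          using H2 H1 fd a by metis
        have 2: "\<omega> up \<bullet> (f up - fnum um up) = F up - H um up"
          using H2 H1 fd a by metis
        show "(\<omega> up - \<omega> um) \<bullet> fnum um up
               = (\<omega> up \<bullet> f up - F up) - (\<omega> um \<bullet> f um - F um)"
          using 1 2 by (simp add: inner_diff_left inner_diff_right)
      qed
    next
      assume B: "\<forall>um\<in>Y. \<forall>up\<in>Y.
             (\<omega> up - \<omega> um) \<bullet> fnum um up
               = (\<omega> up \<bullet> f up - F up) - (\<omega> um \<bullet> f um - F um)"
      have "\<forall>um\<in>Y. \<forall>u0\<in>Y. \<forall>up\<in>Y.
                 \<omega> u0 \<bullet> (fnum u0 up - fnum um u0) = G u0 up - G um u0"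
      proof (intro ballI)
        fix um u0 up assume a: "um \<in> Y" "u0 \<in> Y" "up \<in> Y"
        have "(\<omega> u0 - \<omega> um) \<bullet> fnum um u0
               = (\<omega> u0 \<bullet> f u0 - F u0) - (\<omega> um \<bullet> f um - F um)" using B a by blast
        then show "\<omega> u0 \<bullet> (fnum u0 up - fnum um u0) = G u0 up - G um u0"
          by (simp add: G_def inner_diff_left inner_diff_right)
      qed
      then show "\<exists>Fnum :: real ^ 'n \<Rightarrow> real ^ 'n \<Rightarrow> real.
              (\<forall>u\<in>Y. Fnum u u = F u) \<and>
              (\<forall>um\<in>Y. \<forall>u0\<in>Y. \<forall>up\<in>Y.
                 \<omega> u0 \<bullet> (fnum u0 up - fnum um u0) = Fnum u0 up - Fnum um u0)"
        using GF by blast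
    qed
  next
    fix H :: "real ^ 'n \<Rightarrow> real ^ 'n \<Rightarrow> real"
    assume "(\<forall>u\<in>Y. H u u = F u) \<and>
           (\<forall>um\<in>Y. \<forall>u0\<in>Y. \<forall>up\<in>Y.
              \<omega> u0 \<bullet> (fnum u0 up - fnum um u0) = H u0 up - H um u0)"
    then have H1: "\<forall>u\<in>Y. H u u = F u"
        and H2: "\<forall>um\<in>Y. \<forall>u0\<in>Y. \<forall>up\<in>Y.
                 \<omega> u0 \<bullet> (fnum u0 up - fnum um u0) = H u0 up - H um u0" by blast+
    show "\<forall>um\<in>Y. \<forall>up\<in>Y.
                 H um up = (F um + F up) / 2
                   + ((\<omega> um + \<omega> up) /\<^sub>R 2) \<bullet> fnum um up
                   - (\<omega> um \<bullet> f um + \<omega> up \<bullet> f up) / 2"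
    proof (intro ballI)
      fix um up assume a: "um \<in> Y" "up \<in> Y"
      have 1: "\<omega> um \<bullet> (fnum um up - f um) = H um up - F um"
        using H2 H1 fd a by metis
      have 2: "\<omega> up \<bullet> (f up - fnum um up) = F up - H um up"
        using H2 H1 fd a by metis
      show "H um up = (F um + F up) / 2
                   + ((\<omega> um + \<omega> up) /\<^sub>R 2) \<bullet> fnum um up
                   - (\<omega> um \<bullet> f um + \<omega> up \<bullet> f up) / 2"
        using 1 2 by (simp add: inner_diff_right inner_add_left field_simps)
    qed
  qed
qed

end
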